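(* If $g$ is an inner function and $f \in (H^2)^*$, then for each $n \in \mathbb{N}$, $$Q_n\bigl(1/(fg)\bigr) = \overline{g(0)}\, Q_n(1/f).$$
   Context: $H^2$ is the Hardy space on the unit disc $\mathbb{D}$ with norm $\|\sum_k a_kz^k\|_{H^2}^2=\sum_k|a_k|^2$, and $(H^2)^*=H^2\setminus\{0\}$. An inner function is a bounded holomorphic function on $\mathbb{D}$ whose radial boundary values have modulus $1$ almost everywhere on $\mathbb{T}$. For $F\in (H^2)^*$, $Q_n(1/F)$ is the unique polynomial of degree at most $n$ minimizing $\|qF-1\|_{H^2}$ over polynomials $q$ of degree at most $n$. *)

theory Defs
  imports "HOL-Complex_Analysis.Complex_Analysis" "HOL-Computational_Algebra.Polynomial"
begin

definition taylor_coeff :: "(complex \<Rightarrow> complex) \<Rightarrow> nat \<Rightarrow> complex" where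
  "taylor_coeff f k = (deriv ^^ k) f 0 / of_nat (fact k)"

definition H2 :: "(complex \<Rightarrow> complex) set" where
  "H2 = {f. f holomorphic_on ball 0 1 \<and> summable (\<lambda>k. (norm (taylor_coeff f k))^2)}"

text \<open>(H^2)^* = H^2 without the zero function (as a function on the disc).\<close>
definition H2_star :: "(complex \<Rightarrow> complex) set" where
  "H2_star = {f \<in> H2. \<exists>z\<in>ball 0 1. f z \<noteq> 0}"

definition H2_norm :: "(complex \<Rightarrow> complex) \<Rightarrow> real" where
  "H2_norm f = sqrt (\<Sum>k. (norm (taylor_coeff f k))^2)"

definition inner_function :: "(complex \<Rightarrow> complex) \<Rightarrow> bool" where
  "inner_function g \<longleftrightarrow> g holomorphic_on ball 0 1 \<and> bounded (g ` ball 0 1) \<and>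
     (AE \<theta> in lborel. \<theta> \<in> {0..2*pi} \<longrightarrow>
        (\<exists>L. ((\<lambda>r. g (complex_of_real r * cis \<theta>)) \<longlongrightarrow> L) (at_left 1) \<and> norm L = 1))"

definition is_Qn :: "nat \<Rightarrow> (complex \<Rightarrow> complex) \<Rightarrow> complex poly \<Rightarrow> bool" where
  "is_Qn n F q \<longleftrightarrow> degree q \<le> n \<and>
     (\<forall>p. degree p \<le> n \<longrightarrow>
        H2_norm (\<lambda>z. poly q z * F z - 1) \<le> H2_norm (\<lambda>z. poly p z * F z - 1))"

text \<open>Q_n(1/F): the (unique) minimizer.\<close>
definition Qn :: "nat \<Rightarrow> (complex \<Rightarrow> complex) \<Rightarrow> complex poly" where
  "Qn n F = (THE q. is_Qn n F q)"

end

theory Submission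
  imports Defs
begin

abbreviation "D \<equiv> ball (0::complex) 1"

lemma tc_cong:
  assumes "\<And>z. z \<in> D \<Longrightarrow> F z = G z"
  shows "taylor_coeff F k = taylor_coeff G k"
proof -
  have "eventually (\<lambda>z. F z = G z) (nhds 0)"
    using assms eventually_nhds_in_open[of D 0] by (auto elim!: eventually_mono)
  then show ?thesis unfolding taylor_coeff_def
    using higher_deriv_cong_ev by metis
qed

lemma tc_add:
  assumes "F holomorphic_on D" "G holomorphic_on D"
  shows "taylor_coeff (\<lambda>z. F z + G z) k = taylor_coeff F k + taylor_coeff G k"
  unfolding taylor_coeff_def using higher_deriv_add[OF assms, of 0 k]
  by (simp add: add_divide_distrib)

lemma tc_diff:
  assumes "F holomorphic_on D" "G holomorphic_on D"
  shows "taylor_coeff (\<lambda>z. F z - G z) k = taylor_coeff F k - taylor_coeff G k"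
  unfolding taylor_coeff_def using higher_deriv_diff[OF assms, of 0 k]
  by (simp add: diff_divide_distrib)

lemma tc_cmult:
  assumes "F holomorphic_on D"
  shows "taylor_coeff (\<lambda>z. c * F z) k = c * taylor_coeff F k"
  unfolding taylor_coeff_def using higher_deriv_cmult[OF assms, of 0 k c]
  by simp

lemma tc_const: "taylor_coeff (\<lambda>z. c) k = (if k = 0 then c else 0)"
  unfolding taylor_coeff_def by simp

lemma tc_id: "taylor_coeff (\<lambda>z. z) k = (if k = 1 then 1 else 0)"
  unfolding taylor_coeff_def by simp

lemma tc_mult:
  assumes "F holomorphic_on D" "G holomorphic_on D"
  shows "taylor_coeff (\<lambda>z. F z * G z) k = (\<Sum>i\<le>k. taylor_coeff F i * taylor_coeff G (k - i))"
proof -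
  have "taylor_coeff (\<lambda>z. F z * G z) k =
     (\<Sum>i = 0..k. of_nat (k choose i) * (deriv ^^ i) F 0 * (deriv ^^ (k-i)) G 0) / fact k"
    unfolding taylor_coeff_def using higher_deriv_mult[OF assms, of 0 k] by simp
  also have "\<dots> = (\<Sum>i = 0..k. of_nat (k choose i) * (deriv ^^ i) F 0 * (deriv ^^ (k-i)) G 0 / fact k)"
    by (simp add: sum_divide_distrib)
  also have "\<dots> = (\<Sum>i\<le>k. taylor_coeff F i * taylor_coeff G (k - i))"
    unfolding atLeast0AtMost
  proof (rule sum.cong[OF refl])
    fix i assume "i \<in> {..k}"
    then have ik: "i \<le> k" by simp
    show "of_nat (k choose i) * (deriv ^^ i) F 0 * (deriv ^^ (k-i)) G 0 / fact k =
          taylor_coeff F i * taylor_coeff G (k - i)"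
      unfolding taylor_coeff_def binomial_fact[OF ik]
      by (simp add: field_simps)
  qed
  finally show ?thesis .
qed

lemma aux_delta1: "(\<Sum>i\<le>k. (if i = Suc 0 then 1 else 0) * c i) = (if Suc 0 \<le> k then c (Suc 0) else (0::complex))"
proof -
  have "(\<Sum>i\<le>k. (if i = Suc 0 then 1 else 0) * c i) = (\<Sum>i\<le>k. (if i = Suc 0 then c i else 0))"
    by (rule sum.cong) auto
  then show ?thesis by (simp add: sum.delta)
qed

lemma tc_poly: "taylor_coeff (poly p) k = coeff p k"
proof (induction p arbitrary: k rule: pCons_induct)
  case 0
  then show ?case by (simp add: tc_const[of 0, unfolded fun_eq_iff[symmetric]] )
next
  case (pCons a p)
  have h1: "(\<lambda>z::complex. z) holomorphic_on D" by simp
  have h2: "poly p holomorphic_on D" by (simp add: poly_holomorphic_on)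
  have e1: "taylor_coeff (\<lambda>z. z * poly p z) k = (\<Sum>i\<le>k. (if i = Suc 0 then 1 else 0) * coeff p (k - i))"
    using tc_mult[OF h1 h2] tc_id pCons.IH by simp
  have e2: "taylor_coeff (\<lambda>z. z * poly p z) k = (if Suc 0 \<le> k then coeff p (k - 1) else 0)"
    unfolding e1 using aux_delta1[of "\<lambda>i. coeff p (k - i)" k] by simp
  have "poly (pCons a p) = (\<lambda>z. a + z * poly p z)" by (simp add: fun_eq_iff)
  then have "taylor_coeff (poly (pCons a p)) k = (if k = 0 then a else 0) +
      (if Suc 0 \<le> k then coeff p (k - 1) else 0)"
    using tc_add[of "\<lambda>z. a" "\<lambda>z. z * poly p z"] e2 tc_const
      holomorphic_on_mult[OF h1 h2] by simp
  also have "\<dots> = coeff (pCons a p) k"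
    by (cases k) (auto simp: sum.delta)
  finally show ?case .
qed

lemma tc_sum:
  assumes "finite A" "\<And>i. i \<in> A \<Longrightarrow> F i holomorphic_on D"
  shows "taylor_coeff (\<lambda>z. \<Sum>i\<in>A. F i z) k = (\<Sum>i\<in>A. taylor_coeff (F i) k)"
  using assms
proof (induction A rule: finite_induct)
  case empty
  then show ?case by (simp add: tc_const)
next
  case (insert x A)
  have "taylor_coeff (\<lambda>z. \<Sum>i\<in>insert x A. F i z) k = taylor_coeff (\<lambda>z. F x z + (\<Sum>i\<in>A. F i z)) k"
    using insert by simp
  also have "\<dots> = taylor_coeff (F x) k + taylor_coeff (\<lambda>z. (\<Sum>i\<in>A. F i z)) k"
    using insert by (intro tc_add) (auto intro!: holomorphic_on_sum)
  finally show ?case using insert by simp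
qed

lemma tc_sums:
  assumes "F holomorphic_on D" "w \<in> D"
  shows "(\<lambda>k. taylor_coeff F k * w ^ k) sums F w"
  using holomorphic_power_series[OF assms] unfolding taylor_coeff_def by simp


definition l2 :: "(nat \<Rightarrow> complex) \<Rightarrow> bool" where
  "l2 a \<longleftrightarrow> summable (\<lambda>k. (norm (a k))^2)"
definition nn :: "(nat \<Rightarrow> complex) \<Rightarrow> real" where
  "nn a = (\<Sum>k. (norm (a k))^2)"
definition ip :: "(nat \<Rightarrow> complex) \<Rightarrow> (nat \<Rightarrow> complex) \<Rightarrow> complex" where
  "ip a b = (\<Sum>k. a k * cnj (b k))"

lemma norm_prod_le: "norm (x * cnj (y::complex)) \<le> ((norm x)^2 + (norm y)^2) / 2"
proof -
  have "0 \<le> (norm x - norm y)^2" by simp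
  then show ?thesis by (simp add: norm_mult power2_eq_square algebra_simps)
qed

lemma l2_ip_summable:
  assumes "l2 a" "l2 b" shows "summable (\<lambda>k. a k * cnj (b k))"
proof -
  have "summable (\<lambda>k. ((norm (a k))^2 + (norm (b k))^2) / 2)"
    using assms unfolding l2_def by (intro summable_divide summable_add)
  then have "summable (\<lambda>k. norm (a k * cnj (b k)))"
    by (rule summable_comparison_test'[where N=0]) (simp only: real_norm_def abs_norm_cancel norm_prod_le)
  then show ?thesis by (rule summable_norm_cancel)
qed

lemma ip_sums: "l2 a \<Longrightarrow> l2 b \<Longrightarrow> (\<lambda>k. a k * cnj (b k)) sums ip a b"
  unfolding ip_def using l2_ip_summable summable_sums by blast

lemma nn_sums: "l2 a \<Longrightarrow> (\<lambda>k. (norm (a k))^2) sums nn a"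
  unfolding nn_def l2_def using summable_sums by blast

lemma nn_nonneg: "l2 a \<Longrightarrow> 0 \<le> nn a"
  unfolding nn_def l2_def by (auto intro: suminf_nonneg)

lemma ip_self: "l2 a \<Longrightarrow> ip a a = of_real (nn a)"
proof -
  assume a: "l2 a"
  have "(\<lambda>k. complex_of_real ((norm (a k))^2)) sums of_real (nn a)"
    by (rule sums_of_real[OF nn_sums[OF a]])
  then have "(\<lambda>k. a k * cnj (a k)) sums of_real (nn a)"
    by (simp only: complex_norm_square)
  then show ?thesis using ip_sums[OF a a] sums_unique2 by blast
qed

lemma l2_0[simp]: "l2 (\<lambda>k. 0)" unfolding l2_def by simp

lemma l2_finite:
  assumes "\<And>k. k \<ge> N \<Longrightarrow> a k = 0" shows "l2 a"
  unfolding l2_def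
  by (rule summable_finite[of "{..<N}"]) (auto simp: assms not_less)

lemma l2_scale: "l2 a \<Longrightarrow> l2 (\<lambda>k. c * a k)"
  unfolding l2_def by (simp add: norm_mult power_mult_distrib summable_mult)

lemma l2_add:
  assumes "l2 a" "l2 b" shows "l2 (\<lambda>k. a k + b k)"
proof -
  have "(norm (a k + b k))^2 \<le> 2 * (norm (a k))^2 + 2 * (norm (b k))^2" for k
  proof -
    have "(norm (a k + b k))^2 \<le> (norm (a k) + norm (b k))^2"
      by (simp add: norm_triangle_ineq power_mono)
    also have "\<dots> \<le> 2 * (norm (a k))^2 + 2 * (norm (b k))^2"
      using norm_prod_le[of "a k" "b k"] by (simp add: power2_eq_square algebra_simps norm_mult)
    finally show ?thesis .
  qed
  moreover have "summable (\<lambda>k. 2 * (norm (a k))^2 + 2 * (norm (b k))^2)"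
    using assms unfolding l2_def by (intro summable_add summable_mult)
  ultimately show ?thesis unfolding l2_def
    by (intro summable_comparison_test[of "\<lambda>k. (norm (a k + b k))^2"]) auto
qed

lemma l2_uminus: "l2 a \<Longrightarrow> l2 (\<lambda>k. - a k)"
  unfolding l2_def by simp

lemma l2_diff: "l2 a \<Longrightarrow> l2 b \<Longrightarrow> l2 (\<lambda>k. a k - b k)"
  using l2_add[of a "\<lambda>k. - b k"] l2_uminus by simp

lemma l2_sum: "finite A \<Longrightarrow> (\<And>i. i \<in> A \<Longrightarrow> l2 (e i)) \<Longrightarrow> l2 (\<lambda>k. \<Sum>i\<in>A. e i k)"
  by (induction A rule: finite_induct) (auto intro: l2_add)

lemma ip_add1: "l2 a \<Longrightarrow> l2 b \<Longrightarrow> l2 c \<Longrightarrow> ip (\<lambda>k. a k + b k) c = ip a c + ip b c"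
proof -
  assume "l2 a" "l2 b" "l2 c"
  then have "(\<lambda>k. (a k + b k) * cnj (c k)) sums (ip a c + ip b c)"
    using ip_sums[of a c] ip_sums[of b c] by (simp add: distrib_right sums_add)
  then show ?thesis using ip_sums[of "\<lambda>k. a k + b k" c] l2_add \<open>l2 a\<close> \<open>l2 b\<close> \<open>l2 c\<close>
    using sums_unique2 by blast
qed

lemma ip_diff1: "l2 a \<Longrightarrow> l2 b \<Longrightarrow> l2 c \<Longrightarrow> ip (\<lambda>k. a k - b k) c = ip a c - ip b c"
proof -
  assume "l2 a" "l2 b" "l2 c"
  then have "(\<lambda>k. (a k - b k) * cnj (c k)) sums (ip a c - ip b c)"
    using ip_sums[of a c] ip_sums[of b c] by (simp add: left_diff_distrib sums_diff)
  then show ?thesis using ip_sums[of "\<lambda>k. a k - b k" c] l2_diff \<open>l2 a\<close> \<open>l2 b\<close> \<open>l2 c\<close>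
    using sums_unique2 by blast
qed

lemma ip_scale1: "l2 a \<Longrightarrow> l2 c \<Longrightarrow> ip (\<lambda>k. x * a k) c = x * ip a c"
proof -
  assume "l2 a" "l2 c"
  then have "(\<lambda>k. (x * a k) * cnj (c k)) sums (x * ip a c)"
    using ip_sums[of a c] sums_mult[of _ _ x] by (simp add: mult.assoc)
  then show ?thesis using ip_sums[of "\<lambda>k. x * a k" c] l2_scale \<open>l2 a\<close> \<open>l2 c\<close>
    using sums_unique2 by blast
qed

lemma ip_cnj: "l2 a \<Longrightarrow> l2 b \<Longrightarrow> ip b a = cnj (ip a b)"
proof -
  assume "l2 a" "l2 b"
  then have "(\<lambda>k. cnj (a k * cnj (b k))) sums cnj (ip a b)"
    using ip_sums[of a b] by (simp only: sums_cnj)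
  then have "(\<lambda>k. b k * cnj (a k)) sums cnj (ip a b)" by (simp add: mult.commute)
  then show ?thesis using ip_sums[of b a] \<open>l2 a\<close> \<open>l2 b\<close> sums_unique2 by blast
qed

lemma ip_add2: "l2 a \<Longrightarrow> l2 b \<Longrightarrow> l2 c \<Longrightarrow> ip c (\<lambda>k. a k + b k) = ip c a + ip c b"
proof -
  assume a: "l2 a" "l2 b" "l2 c"
  have "ip c (\<lambda>k. a k + b k) = cnj (ip (\<lambda>k. a k + b k) c)"
    by (rule ip_cnj) (use a in \<open>auto intro: l2_add\<close>)
  also have "\<dots> = cnj (ip a c) + cnj (ip b c)" using a by (simp add: ip_add1)
  also have "\<dots> = ip c a + ip c b" using a ip_cnj[of c a] ip_cnj[of c b] by simp
  finally show ?thesis .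
qed

lemma ip_diff2: "l2 a \<Longrightarrow> l2 b \<Longrightarrow> l2 c \<Longrightarrow> ip c (\<lambda>k. a k - b k) = ip c a - ip c b"
proof -
  assume a: "l2 a" "l2 b" "l2 c"
  have "ip c (\<lambda>k. a k - b k) = cnj (ip (\<lambda>k. a k - b k) c)"
    by (rule ip_cnj) (use a in \<open>auto intro: l2_diff\<close>)
  also have "\<dots> = cnj (ip a c) - cnj (ip b c)" using a by (simp add: ip_diff1)
  also have "\<dots> = ip c a - ip c b" using a ip_cnj[of c a] ip_cnj[of c b] by simp
  finally show ?thesis .
qed

lemma ip_scale2: "l2 a \<Longrightarrow> l2 c \<Longrightarrow> ip c (\<lambda>k. x * a k) = cnj x * ip c a"
proof -
  assume a: "l2 a" "l2 c"
  have "ip c (\<lambda>k. x * a k) = cnj (ip (\<lambda>k. x * a k) c)"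
    by (rule ip_cnj) (use a in \<open>auto intro: l2_scale\<close>)
  also have "\<dots> = cnj x * cnj (ip a c)" using a by (simp add: ip_scale1)
  also have "cnj (ip a c) = ip c a" using a ip_cnj[of c a] by simp
  finally show ?thesis .
qed

lemma ip_sum1:
  assumes "finite A" "\<And>i. i \<in> A \<Longrightarrow> l2 (e i)" "l2 c"
  shows "ip (\<lambda>k. \<Sum>i\<in>A. \<beta> i * e i k) c = (\<Sum>i\<in>A. \<beta> i * ip (e i) c)"
  using assms
proof (induction A rule: finite_induct)
  case empty
  then show ?case unfolding ip_def by simp
next
  case (insert x A)
  have "ip (\<lambda>k. \<Sum>i\<in>insert x A. \<beta> i * e i k) c = ip (\<lambda>k. \<beta> x * e x k + (\<Sum>i\<in>A. \<beta> i * e i k)) c"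
    using insert by simp
  also have "\<dots> = ip (\<lambda>k. \<beta> x * e x k) c + ip (\<lambda>k. (\<Sum>i\<in>A. \<beta> i * e i k)) c"
    using insert by (intro ip_add1 l2_scale l2_sum) auto
  finally show ?case using insert by (simp add: ip_scale1)
qed

lemma ip_sum2:
  assumes "finite A" "\<And>i. i \<in> A \<Longrightarrow> l2 (e i)" "l2 c"
  shows "ip c (\<lambda>k. \<Sum>i\<in>A. \<beta> i * e i k) = (\<Sum>i\<in>A. cnj (\<beta> i) * ip c (e i))"
proof -
  have "ip c (\<lambda>k. \<Sum>i\<in>A. \<beta> i * e i k) = cnj (ip (\<lambda>k. \<Sum>i\<in>A. \<beta> i * e i k) c)"
    using assms by (intro ip_cnj l2_sum l2_scale) auto
  also have "\<dots> = (\<Sum>i\<in>A. cnj (\<beta> i) * cnj (ip (e i) c))"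
    using assms by (simp add: ip_sum1)
  also have "\<dots> = (\<Sum>i\<in>A. cnj (\<beta> i) * ip c (e i))"
    using assms ip_cnj[of c] by (intro sum.cong refl) simp
  finally show ?thesis .
qed

lemma nn_add:
  assumes "l2 a" "l2 b"
  shows "nn (\<lambda>k. a k + b k) = nn a + nn b + 2 * Re (ip a b)"
proof -
  have "complex_of_real (nn (\<lambda>k. a k + b k)) = ip (\<lambda>k. a k + b k) (\<lambda>k. a k + b k)"
    using assms by (simp add: ip_self l2_add)
  also have "\<dots> = ip a a + ip a b + ip b a + ip b b"
    using assms by (simp add: ip_add1 ip_add2 l2_add)
  also have "\<dots> = of_real (nn a) + of_real (nn b) + (ip a b + cnj (ip a b))"
    using assms ip_cnj[of a b] by (simp add: ip_self)
  also have "\<dots> = of_real (nn a + nn b + 2 * Re (ip a b))"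
    by (simp add: complex_add_cnj)
  finally show ?thesis by (simp only: of_real_eq_iff)
qed

lemma nn_diff:
  assumes "l2 a" "l2 b"
  shows "nn (\<lambda>k. a k - b k) = nn a + nn b - 2 * Re (ip a b)"
proof -
  have "nn (\<lambda>k. a k - b k) = nn (\<lambda>k. a k + (- 1) * b k)" by simp
  also have "\<dots> = nn a + nn (\<lambda>k. (-1) * b k) + 2 * Re (ip a (\<lambda>k. (-1) * b k))"
    using assms by (intro nn_add l2_scale)
  also have "nn (\<lambda>k. (-1) * b k) = nn b" unfolding nn_def by simp
  also have "ip a (\<lambda>k. (-1) * b k) = - ip a b" using assms ip_scale2[of b a "-1"] by simp
  finally show ?thesis by simp
qed

lemma nn_scale: "l2 a \<Longrightarrow> nn (\<lambda>k. c * a k) = (norm c)^2 * nn a"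
  unfolding nn_def l2_def by (simp add: norm_mult power_mult_distrib suminf_mult)

lemma nn_eq_0: "l2 a \<Longrightarrow> nn a = 0 \<longleftrightarrow> (\<forall>k. a k = 0)"
  unfolding nn_def l2_def by (subst suminf_eq_zero_iff) auto

lemma cauchy_schwarz:
  assumes "l2 a" "l2 b"
  shows "(norm (ip a b))^2 \<le> nn a * nn b"
proof (cases "nn b = 0")
  case True
  then have "\<forall>k. b k = 0" using nn_eq_0 assms by blast
  then have "ip a b = 0" unfolding ip_def by simp
  then show ?thesis using nn_nonneg assms by simp
next
  case False
  then have nb: "nn b > 0" using nn_nonneg[of b] assms by simp
  define t where "t = ip a b / of_real (nn b)"
  have "0 \<le> nn (\<lambda>k. a k - t * b k)" by (rule nn_nonneg) (use assms in \<open>auto intro: l2_diff l2_scale\<close>)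
  also have "\<dots> = nn a + nn (\<lambda>k. t * b k) - 2 * Re (ip a (\<lambda>k. t * b k))"
    using assms by (intro nn_diff l2_scale)
  also have "nn (\<lambda>k. t * b k) = (norm t)^2 * nn b" using assms by (simp add: nn_scale)
  also have "ip a (\<lambda>k. t * b k) = cnj t * ip a b" using assms by (simp add: ip_scale2)
  also have "cnj t * ip a b = (ip a b * cnj (ip a b)) / of_real (nn b)"
    unfolding t_def by simp
  also have "\<dots> = of_real ((norm (ip a b))^2 / nn b)"
    by (simp only: complex_norm_square[symmetric] of_real_divide)
  also have "(norm t)^2 * nn b = (norm (ip a b))^2 / nn b"
    unfolding t_def using nb by (simp add: norm_divide power2_eq_square)
  finally have "(norm (ip a b))^2 / nn b \<le> nn a" by simp
  then show ?thesis using nb by (simp add: pos_divide_le_eq)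
qed

lemma nn_triangle:
  assumes "l2 a" "l2 b"
  shows "sqrt (nn (\<lambda>k. a k + b k)) \<le> sqrt (nn a) + sqrt (nn b)"
proof -
  have na: "0 \<le> nn a" and nb: "0 \<le> nn b" using assms nn_nonneg by auto
  have "Re (ip a b) \<le> norm (ip a b)" by (rule complex_Re_le_cmod)
  also have "\<dots> \<le> sqrt (nn a * nn b)"
    using cauchy_schwarz[OF assms] by (simp add: real_le_rsqrt)
  also have "\<dots> = sqrt (nn a) * sqrt (nn b)" by (simp add: real_sqrt_mult)
  finally have "nn (\<lambda>k. a k + b k) \<le> (sqrt (nn a))^2 + (sqrt (nn b))^2 + 2 * (sqrt (nn a) * sqrt (nn b))"
    using nn_add[OF assms] na nb by simp
  also have "\<dots> = (sqrt (nn a) + sqrt (nn b))^2" by (simp add: power2_eq_square algebra_simps)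
  finally show ?thesis
    using na nb by (simp add: real_sqrt_le_iff real_le_lsqrt)
qed


lemma ip_orth_sum:
  assumes "finite A" "\<And>i. i \<in> A \<Longrightarrow> l2 (e i)" "l2 r" "\<And>i. i \<in> A \<Longrightarrow> ip r (e i) = 0"
  shows "ip r (\<lambda>k. \<Sum>i\<in>A. \<beta> i * e i k) = 0"
  using assms by (simp add: ip_sum2)

lemma proj_exists:
  fixes n :: nat
  assumes e: "\<And>i. l2 (e i)"
  shows "l2 x \<Longrightarrow> \<exists>\<beta>. \<forall>j<n. ip (\<lambda>k. x k - (\<Sum>i<n. \<beta> i * e i k)) (e j) = 0"
proof (induction n arbitrary: x)
  case 0
  then show ?case by simp
next
  case (Suc n)
  obtain \<beta> where b: "\<forall>j<n. ip (\<lambda>k. x k - (\<Sum>i<n. \<beta> i * e i k)) (e j) = 0"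
    using Suc.IH[OF Suc.prems] by blast
  obtain \<gamma> where g: "\<forall>j<n. ip (\<lambda>k. e n k - (\<Sum>i<n. \<gamma> i * e i k)) (e j) = 0"
    using Suc.IH[OF e[of n]] by blast
  define r where "r = (\<lambda>k. x k - (\<Sum>i<n. \<beta> i * e i k))"
  define w where "w = (\<lambda>k. e n k - (\<Sum>i<n. \<gamma> i * e i k))"
  have lS: "l2 (\<lambda>k. \<Sum>i<n. c i * e i k)" for c by (intro l2_sum l2_scale e) auto
  have lr: "l2 r" unfolding r_def using Suc.prems lS by (intro l2_diff)
  have lw: "l2 w" unfolding w_def using e lS by (intro l2_diff)
  have rj: "ip r (e j) = 0" if "j < n" for j using b that unfolding r_def by blast
  have wj: "ip w (e j) = 0" if "j < n" for j using g that unfolding w_def by blast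
  have en: "e n = (\<lambda>k. w k + (\<Sum>i<n. \<gamma> i * e i k))" unfolding w_def by simp
  show ?case
  proof (cases "nn w = 0")
    case True
    then have w0: "\<And>k. w k = 0" using nn_eq_0[OF lw] by blast
    define \<beta>' where "\<beta>' = \<beta>(n := 0)"
    have sum_eq: "(\<Sum>i<Suc n. \<beta>' i * e i k) = (\<Sum>i<n. \<beta> i * e i k)" for k
    proof -
      have "(\<Sum>i<n. \<beta>' i * e i k) = (\<Sum>i<n. \<beta> i * e i k)"
        by (rule sum.cong) (auto simp: \<beta>'_def)
      then show ?thesis by (simp add: \<beta>'_def)
    qed
    have "ip (\<lambda>k. x k - (\<Sum>i<Suc n. \<beta>' i * e i k)) (e j) = 0" if "j < Suc n" for j
    proof (cases "j < n")
      case True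
      then show ?thesis using rj[of j] unfolding sum_eq r_def by simp
    next
      case False
      then have "j = n" using that by simp
      have "ip r (e n) = ip r (\<lambda>k. \<Sum>i<n. \<gamma> i * e i k)"
        using en w0 by simp
      also have "\<dots> = 0" by (rule ip_orth_sum) (use e lr rj in auto)
      finally show ?thesis using \<open>j = n\<close> unfolding sum_eq r_def by simp
    qed
    then show ?thesis by blast
  next
    case False
    define \<alpha> where "\<alpha> = ip r w / of_real (nn w)"
    define \<beta>' where "\<beta>' = (\<lambda>i. if i = n then \<alpha> else \<beta> i - \<alpha> * \<gamma> i)"
    have sum_eq: "x k - (\<Sum>i<Suc n. \<beta>' i * e i k) = r k - \<alpha> * w k" for k
    proof -
      have "(\<Sum>i<Suc n. \<beta>' i * e i k) = (\<Sum>i<n. (\<beta> i - \<alpha> * \<gamma> i) * e i k) + \<alpha> * e n k"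
      proof -
        have "(\<Sum>i<n. \<beta>' i * e i k) = (\<Sum>i<n. (\<beta> i - \<alpha> * \<gamma> i) * e i k)"
          by (rule sum.cong) (auto simp: \<beta>'_def)
        then show ?thesis by (simp add: \<beta>'_def)
      qed
      also have "\<dots> = (\<Sum>i<n. \<beta> i * e i k) - \<alpha> * (\<Sum>i<n. \<gamma> i * e i k) + \<alpha> * e n k"
        by (simp add: left_diff_distrib sum_subtractf sum_distrib_left mult.assoc)
      finally show ?thesis unfolding r_def w_def by (simp add: algebra_simps)
    qed
    have lrw: "l2 (\<lambda>k. r k - \<alpha> * w k)" using lr lw by (intro l2_diff l2_scale)
    have oj: "ip (\<lambda>k. r k - \<alpha> * w k) (e j) = 0" if "j < n" for j
      using rj[OF that] wj[OF that] ip_diff1[OF lr l2_scale[OF lw] e[of j]] ip_scale1[OF lw e[of j]]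
      by simp
    have "ip (\<lambda>k. r k - \<alpha> * w k) w = ip r w - \<alpha> * of_real (nn w)"
      using lr lw by (simp add: ip_diff1 l2_scale ip_scale1 ip_self)
    also have "\<dots> = 0" unfolding \<alpha>_def using False by simp
    finally have ow: "ip (\<lambda>k. r k - \<alpha> * w k) w = 0" .
    have on: "ip (\<lambda>k. r k - \<alpha> * w k) (e n) = 0"
    proof -
      have "ip (\<lambda>k. r k - \<alpha> * w k) (e n) =
            ip (\<lambda>k. r k - \<alpha> * w k) w + ip (\<lambda>k. r k - \<alpha> * w k) (\<lambda>k. \<Sum>i<n. \<gamma> i * e i k)"
        by (subst en) (rule ip_add2[OF lw lS lrw])
      also have "ip (\<lambda>k. r k - \<alpha> * w k) (\<lambda>k. \<Sum>i<n. \<gamma> i * e i k) = 0"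
        by (rule ip_orth_sum) (use e lrw oj in auto)
      finally show ?thesis using ow by simp
    qed
    have "ip (\<lambda>k. x k - (\<Sum>i<Suc n. \<beta>' i * e i k)) (e j) = 0" if "j < Suc n" for j
    proof -
      have "j < n \<or> j = n" using that by auto
      then show ?thesis unfolding sum_eq using oj on by auto
    qed
    then show ?thesis by blast
  qed
qed

lemma proj_min:
  fixes n :: nat
  assumes e: "\<And>i. l2 (e i)" and x: "l2 x"
    and orth: "\<forall>j<n. ip (\<lambda>k. x k - (\<Sum>i<n. \<beta> i * e i k)) (e j) = 0"
  shows "nn (\<lambda>k. x k - (\<Sum>i<n. \<beta> i * e i k)) \<le> nn (\<lambda>k. x k - (\<Sum>i<n. \<gamma> i * e i k))"
proof -
  define u where "u = (\<lambda>k. x k - (\<Sum>i<n. \<beta> i * e i k))"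
  define v where "v = (\<lambda>k. \<Sum>i<n. (\<beta> i - \<gamma> i) * e i k)"
  have lS: "l2 (\<lambda>k. \<Sum>i<n. c i * e i k)" for c by (intro l2_sum l2_scale e) auto
  have lu: "l2 u" unfolding u_def using x lS by (intro l2_diff)
  have lv: "l2 v" unfolding v_def using lS by simp
  have eq: "(\<lambda>k. x k - (\<Sum>i<n. \<gamma> i * e i k)) = (\<lambda>k. u k + v k)"
    unfolding u_def v_def by (simp add: fun_eq_iff left_diff_distrib sum_subtractf)
  have "ip u v = 0" unfolding v_def by (rule ip_orth_sum) (use e lu orth in \<open>auto simp: u_def\<close>)
  then have "nn (\<lambda>k. u k + v k) = nn u + nn v" using nn_add[OF lu lv] by simp
  then show ?thesis unfolding eq using nn_nonneg[OF lv] by (simp add: u_def)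
qed


lemma cis_int_integral:
  fixes m :: int
  shows "((\<lambda>\<theta>. cis (of_int m * \<theta>)) has_integral (if m = 0 then of_real (2*pi) else 0)) {0..2*pi}"
proof (cases "m = 0")
  case True
  have "((\<lambda>\<theta>::real. (1::complex)) has_integral (measure lborel {0..2*pi} *\<^sub>R 1)) {0..2*pi}"
    by (rule has_integral_const_real)
  then show ?thesis using True by (simp add: scaleR_conv_of_real)
next
  case False
  define f where "f = (\<lambda>z::complex. exp (\<i> * of_int m * z) / (\<i> * of_int m))"
  have d: "(f has_field_derivative exp (\<i> * of_int m * z)) (at z)" for z
    unfolding f_def using False
    by (auto intro!: derivative_eq_intros simp: field_simps)
  have "((\<lambda>\<theta>. exp (\<i> * of_int m * of_real \<theta>)) has_integral (f (of_real (2*pi)) - f (of_real 0))) {0..2*pi}"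
    by (rule fundamental_theorem_of_calculus)
       (auto intro!: has_vector_derivative_real_field[of f, OF d])
  moreover have "f (of_real (2*pi)) - f (of_real 0) = 0"
  proof -
    have "exp (\<i> * of_int m * of_real (2*pi)) = cis (2 * pi * of_int m)"
      by (simp add: cis_conv_exp mult_ac)
    also have "\<dots> = 1" by (simp add: cis_multiple_2pi)
    finally show ?thesis unfolding f_def by simp
  qed
  moreover have "exp (\<i> * of_int m * of_real \<theta>) = cis (of_int m * \<theta>)" for \<theta>
    by (simp add: cis_conv_exp mult_ac)
  ultimately show ?thesis using False by simp
qed

lemma cis_orth:
  fixes j k :: nat
  shows "((\<lambda>\<theta>. cis \<theta> ^ j * cnj (cis \<theta> ^ k)) has_integral (if j = k then of_real (2*pi) else 0)) {0..2*pi}"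
proof -
  have "cis \<theta> ^ j * cnj (cis \<theta> ^ k) = cis (of_int (int j - int k) * \<theta>)" for \<theta>
  proof -
    have "cis \<theta> ^ j * cnj (cis \<theta> ^ k) = cis (real j * \<theta>) * cis (- (real k * \<theta>))"
      by (simp only: Complex.DeMoivre cis_cnj)
    also have "\<dots> = cis (of_int (int j - int k) * \<theta>)"
      by (simp only: cis_mult) (simp add: algebra_simps)
    finally show ?thesis .
  qed
  then show ?thesis using cis_int_integral[of "int j - int k"] by simp
qed


lemma finite_parseval:
  fixes a :: "nat \<Rightarrow> complex"
  shows "((\<lambda>\<theta>. (norm (\<Sum>k<N. a k * cis \<theta> ^ k))^2) has_integral (2*pi * (\<Sum>k<N. (norm (a k))^2))) {0..2*pi}"
proof -
  have eq: "complex_of_real ((norm (\<Sum>k<N. a k * cis \<theta> ^ k))^2) =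
      (\<Sum>j<N. \<Sum>k<N. (a j * cnj (a k)) * (cis \<theta> ^ j * cnj (cis \<theta> ^ k)))" for \<theta>
    unfolding complex_norm_square cnj_sum sum_product
    by (simp add: mult_ac)
  have "((\<lambda>\<theta>. \<Sum>j<N. \<Sum>k<N. (a j * cnj (a k)) * (cis \<theta> ^ j * cnj (cis \<theta> ^ k))) has_integral
        (\<Sum>j<N. \<Sum>k<N. (a j * cnj (a k)) * (if j = k then of_real (2*pi) else 0))) {0..2*pi}"
    by (intro has_integral_sum finite_lessThan has_integral_mult_right cis_orth)
  also have "(\<Sum>j<N. \<Sum>k<N. (a j * cnj (a k)) * (if j = k then of_real (2*pi) else 0)) =
       (\<Sum>j<N. a j * cnj (a j) * of_real (2*pi))"
    by (simp add: if_distrib sum.delta cong: if_cong)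
  also have "\<dots> = (\<Sum>j<N. of_real (2*pi) * complex_of_real ((norm (a j))^2))"
    by (simp only: complex_norm_square) (simp add: mult_ac)
  also have "\<dots> = of_real (2*pi * (\<Sum>k<N. (norm (a k))^2))"
    by (simp only: of_real_mult of_real_sum sum_distrib_left)
  finally have "((\<lambda>\<theta>. complex_of_real ((norm (\<Sum>k<N. a k * cis \<theta> ^ k))^2)) has_integral
       of_real (2*pi * (\<Sum>k<N. (norm (a k))^2))) {0..2*pi}"
    unfolding eq .
  from has_integral_linear[OF this bounded_linear_Re] show ?thesis by (simp add: o_def)
qed


lemma tc_abs_summable:
  assumes F: "F holomorphic_on D" and r: "0 \<le> r" "r < 1"
  shows "summable (\<lambda>k. norm (taylor_coeff F k) * r^k)"
proof -
  define \<rho> where "\<rho> = (1 + r) / 2"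
  have \<rho>: "0 < \<rho>" "\<rho> < 1" "r < \<rho>" using r unfolding \<rho>_def by auto
  have sub: "cball 0 \<rho> \<subseteq> D" using \<rho> by auto
  have cont: "continuous_on (cball 0 \<rho>) F"
    using holomorphic_on_imp_continuous_on[OF F] sub continuous_on_subset by blast
  obtain B where B: "B \<ge> 0" "\<And>x. x \<in> cball 0 \<rho> \<Longrightarrow> norm (F x) \<le> B"
    using continuous_on_compact_bound[OF compact_cball cont] by blast
  have hol: "F holomorphic_on ball 0 \<rho>" using F sub holomorphic_on_subset ball_subset_cball by blast
  have ci: "norm ((deriv ^^ k) F 0) \<le> fact k * B / \<rho>^k" for k
    by (rule Cauchy_inequality[OF hol cont \<rho>(1)]) (use B in auto)
  have bnd: "norm (norm (taylor_coeff F k) * r^k) \<le> B * (r / \<rho>)^k" for k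
  proof -
    have "norm (taylor_coeff F k) = norm ((deriv ^^ k) F 0) / fact k"
      unfolding taylor_coeff_def by (simp add: norm_divide)
    also have "\<dots> \<le> B / \<rho>^k" using ci[of k] by (simp add: divide_le_eq field_simps)
    finally have nb: "norm (taylor_coeff F k) \<le> B / \<rho>^k" .
    have "norm (taylor_coeff F k) * r^k \<le> B / \<rho>^k * r^k"
      using nb by (rule mult_right_mono) (use r in auto)
    moreover have "B / \<rho>^k * r^k = B * (r / \<rho>)^k" by (simp add: power_divide)
    ultimately show ?thesis using r by simp
  qed
  have "summable (\<lambda>k. B * (r / \<rho>)^k)"
    using \<rho> r by (intro summable_mult summable_geometric) simp
  then show ?thesis by (rule summable_comparison_test'[where N=0]) (rule bnd)
qed

lemma parseval_r:
  assumes F: "F holomorphic_on D" and r: "0 \<le> r" "r < 1"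
  shows "(\<lambda>k. (norm (taylor_coeff F k))^2 * r^(2*k)) sums
          ((LINT \<theta>:{0..2*pi}|lborel. (norm (F (of_real r * cis \<theta>)))^2) / (2*pi))"
proof -
  define a where "a k = taylor_coeff F k * of_real r ^ k" for k
  define S where "S N \<theta> = (\<Sum>k<N. a k * cis \<theta> ^ k)" for N \<theta>
  define A where "A = (\<Sum>k. norm (taylor_coeff F k) * r^k)"
  have sA: "summable (\<lambda>k. norm (taylor_coeff F k) * r^k)" by (rule tc_abs_summable[OF F r])
  have na: "norm (a k) = norm (taylor_coeff F k) * r^k" for k
    unfolding a_def using r by (simp add: norm_mult norm_power)
  have Sb: "norm (S N \<theta>) \<le> A" for N \<theta>
  proof -
    have "norm (S N \<theta>) \<le> (\<Sum>k<N. norm (a k * cis \<theta> ^ k))"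
      unfolding S_def by (rule norm_sum)
    also have "\<dots> = (\<Sum>k<N. norm (taylor_coeff F k) * r^k)"
      by (simp add: norm_mult norm_power na)
    also have "\<dots> \<le> A" unfolding A_def
      by (rule sum_le_suminf[OF sA]) (use r in auto)
    finally show ?thesis .
  qed
  have A0: "0 \<le> A" using Sb[of 0 0] by (simp add: S_def)
  have inD: "of_real r * cis \<theta> \<in> D" for \<theta> using r by (simp add: norm_mult)
  have Slim: "(\<lambda>N. S N \<theta>) \<longlonglongrightarrow> F (of_real r * cis \<theta>)" for \<theta>
  proof -
    have "(\<lambda>k. taylor_coeff F k * (of_real r * cis \<theta>) ^ k) sums F (of_real r * cis \<theta>)"
      by (rule tc_sums[OF F inD])
    then show ?thesis unfolding sums_def S_def a_def by (simp add: power_mult_distrib mult_ac)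
  qed
  have contF: "continuous_on UNIV (\<lambda>\<theta>. F (of_real r * cis \<theta>))"
  proof -
    have "continuous_on UNIV (\<lambda>\<theta>::real. of_real r * cis \<theta>)"
      by (intro continuous_intros)
    from continuous_on_compose2[OF holomorphic_on_imp_continuous_on[OF F] this]
    show ?thesis using inD by blast
  qed
  have contS: "continuous_on UNIV (S N)" for N
    unfolding S_def by (intro continuous_intros)
  define s where "s N \<theta> = indicator {0..2*pi} \<theta> * (norm (S N \<theta>))^2" for N \<theta>
  define f where "f \<theta> = indicator {0..2*pi} \<theta> * (norm (F (of_real r * cis \<theta>)))^2" for \<theta>
  define w where "w \<theta> = indicator {0..2*pi} \<theta> * A^2" for \<theta> :: real
  have mf: "f \<in> borel_measurable lborel"
  proof -
    have "(\<lambda>\<theta>. (norm (F (of_real r * cis \<theta>)))^2) \<in> borel_measurable borel"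
      by (intro borel_measurable_continuous_onI continuous_intros contF)
    then show ?thesis unfolding f_def by simp
  qed
  have ms: "s N \<in> borel_measurable lborel" for N
  proof -
    have "(\<lambda>\<theta>. (norm (S N \<theta>))^2) \<in> borel_measurable borel"
      by (intro borel_measurable_continuous_onI continuous_intros contS)
    then show ?thesis unfolding s_def by simp
  qed
  have iw: "integrable lborel w"
    using borel_integrable_compact[of "{0..2*pi}" "\<lambda>_. A^2"] unfolding w_def by simp
  have lim: "AE \<theta> in lborel. (\<lambda>N. s N \<theta>) \<longlonglongrightarrow> f \<theta>"
    unfolding s_def f_def by (intro AE_I2 tendsto_intros Slim)
  have bound: "AE \<theta> in lborel. norm (s N \<theta>) \<le> w \<theta>" for N
  proof (intro AE_I2)
    fix \<theta>
    have "(norm (S N \<theta>))^2 \<le> A^2" using Sb[of N \<theta>] by (simp add: power_mono)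
    then show "norm (s N \<theta>) \<le> w \<theta>" unfolding s_def w_def by (simp add: indicator_def)
  qed
  have conv: "(\<lambda>N. integral\<^sup>L lborel (s N)) \<longlonglongrightarrow> integral\<^sup>L lborel f"
    by (rule integral_dominated_convergence[OF mf ms iw lim bound])
  have sN: "integral\<^sup>L lborel (s N) = 2*pi * (\<Sum>k<N. (norm (taylor_coeff F k))^2 * r^(2*k))" for N
  proof -
    have si: "set_integrable lborel {0..2*pi} (\<lambda>\<theta>. (norm (S N \<theta>))^2)"
      unfolding set_integrable_def
      by (rule borel_integrable_compact) (auto intro!: continuous_intros continuous_on_subset[OF contS])
    have "integral\<^sup>L lborel (s N) = (LINT \<theta>:{0..2*pi}|lborel. (norm (S N \<theta>))^2)"
      unfolding s_def set_lebesgue_integral_def by simp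
    also have "\<dots> = integral {0..2*pi} (\<lambda>\<theta>. (norm (S N \<theta>))^2)"
      by (rule set_borel_integral_eq_integral(2)[OF si])
    also have "\<dots> = 2*pi * (\<Sum>k<N. (norm (a k))^2)"
      unfolding S_def by (rule integral_unique[OF finite_parseval])
    also have "\<dots> = 2*pi * (\<Sum>k<N. (norm (taylor_coeff F k))^2 * r^(2*k))"
      by (simp add: na power_mult_distrib power_mult[symmetric] mult.commute[of 2])
    finally show ?thesis .
  qed
  have fI: "integral\<^sup>L lborel f = (LINT \<theta>:{0..2*pi}|lborel. (norm (F (of_real r * cis \<theta>)))^2)"
    unfolding f_def set_lebesgue_integral_def by simp
  have "(\<lambda>N. 2*pi * (\<Sum>k<N. (norm (taylor_coeff F k))^2 * r^(2*k)) / (2*pi)) \<longlonglongrightarrow>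
        integral\<^sup>L lborel f / (2*pi)"
    using conv unfolding sN by (intro tendsto_divide) auto
  then show ?thesis unfolding sums_def fI by simp
qed


lemma abel_nonneg:
  fixes b :: "nat \<Rightarrow> real" and r :: "nat \<Rightarrow> real"
  assumes b: "\<And>k. 0 \<le> b k" and r: "\<And>m. 0 \<le> r m" "\<And>m. r m < 1" and rl: "r \<longlonglongrightarrow> 1"
    and s: "\<And>m. (\<lambda>k. b k * r m ^ (2*k)) sums T m" and T: "T \<longlonglongrightarrow> T0"
  shows "b sums T0"
proof -
  have part: "(\<Sum>k<K. b k) \<le> T0" for K
  proof -
    have "(\<lambda>m. \<Sum>k<K. b k * r m ^ (2*k)) \<longlonglongrightarrow> (\<Sum>k<K. b k * 1 ^ (2*k))"
      by (intro tendsto_intros rl)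
    moreover have "(\<Sum>k<K. b k * r m ^ (2*k)) \<le> T m" for m
      using sum_le_suminf[OF sums_summable[OF s[of m]], of "{..<K}"] sums_unique[OF s[of m]] b r
      by auto
    ultimately show ?thesis using T by (simp add: LIMSEQ_le)
  qed
  have sb: "summable b" by (rule summableI_nonneg_bounded[OF b part])
  have le1: "suminf b \<le> T0" by (rule suminf_le_const[OF sb part])
  have "T m \<le> suminf b" for m
  proof -
    have "T m = (\<Sum>k. b k * r m ^ (2*k))" using s[of m] sums_unique by blast
    also have "\<dots> \<le> suminf b"
    proof (rule suminf_le[OF _ sums_summable[OF s[of m]] sb])
      fix k
      have "r m ^ (2*k) \<le> 1" using r[of m] by (simp add: power_le_one)
      then show "b k * r m ^ (2*k) \<le> b k" using b[of k] by (simp add: mult_left_le)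
    qed
    finally show ?thesis .
  qed
  then have "T0 \<le> suminf b" using T by (simp add: LIMSEQ_le_const2)
  with le1 have "suminf b = T0" by simp
  then show ?thesis using sb summable_sums by fastforce
qed

lemma radial_integral_limit:
  fixes G :: "complex \<Rightarrow> complex" and h :: "real \<Rightarrow> real"
  assumes G: "G holomorphic_on D" and C: "\<And>z. z \<in> D \<Longrightarrow> norm (G z) \<le> C"
    and h: "continuous_on UNIV h"
    and lim: "AE \<theta> in lborel. \<theta> \<in> {0..2*pi} \<longrightarrow> ((\<lambda>r. (norm (G (of_real r * cis \<theta>)))^2) \<longlongrightarrow> h \<theta>) (at_left 1)"
    and r: "\<And>m. 0 \<le> r m" "\<And>m. r m < 1" and rl: "r \<longlonglongrightarrow> 1"
  shows "(\<lambda>m. LINT \<theta>:{0..2*pi}|lborel. (norm (G (of_real (r m) * cis \<theta>)))^2) \<longlonglongrightarrow>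
           (LINT \<theta>:{0..2*pi}|lborel. h \<theta>)"
proof -
  have fl: "filterlim r (at_left 1) sequentially"
    using rl r(2) by (intro tendsto_imp_filterlim_at_left) auto
  have inD: "of_real (r m) * cis \<theta> \<in> D" for m \<theta> using r[of m] r(2)[of m] by (simp add: norm_mult)
  have contG: "continuous_on UNIV (\<lambda>\<theta>. G (of_real (r m) * cis \<theta>))" for m
  proof -
    have "continuous_on UNIV (\<lambda>\<theta>::real. of_real (r m) * cis \<theta>)"
      by (intro continuous_intros)
    from continuous_on_compose2[OF holomorphic_on_imp_continuous_on[OF G] this]
    show ?thesis using inD by blast
  qed
  define s where "s m \<theta> = indicator {0..2*pi} \<theta> * (norm (G (of_real (r m) * cis \<theta>)))^2" for m \<theta>
  define f where "f \<theta> = indicator {0..2*pi} \<theta> * h \<theta>" for \<theta>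
  define w where "w \<theta> = indicator {0..2*pi} \<theta> * C^2" for \<theta> :: real
  have mf: "f \<in> borel_measurable lborel"
  proof -
    have "h \<in> borel_measurable borel" by (intro borel_measurable_continuous_onI h)
    then show ?thesis unfolding f_def by simp
  qed
  have ms: "s m \<in> borel_measurable lborel" for m
  proof -
    have "(\<lambda>\<theta>. (norm (G (of_real (r m) * cis \<theta>)))^2) \<in> borel_measurable borel"
      by (intro borel_measurable_continuous_onI continuous_intros contG)
    then show ?thesis unfolding s_def by simp
  qed
  have iw: "integrable lborel w"
    using borel_integrable_compact[of "{0..2*pi}" "\<lambda>_. C^2"] unfolding w_def by simp
  have L: "AE \<theta> in lborel. (\<lambda>m. s m \<theta>) \<longlonglongrightarrow> f \<theta>"
    using lim
  proof eventually_elim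
    case (elim \<theta>)
    show ?case
    proof (cases "\<theta> \<in> {0..2*pi}")
      case True
      then have "((\<lambda>r. (norm (G (of_real r * cis \<theta>)))^2) \<longlongrightarrow> h \<theta>) (at_left 1)" using elim by blast
      from filterlim_compose[OF this fl] show ?thesis
        unfolding s_def f_def using True by (simp add: o_def)
    next
      case False
      then show ?thesis unfolding s_def f_def by simp
    qed
  qed
  have bound: "AE \<theta> in lborel. norm (s m \<theta>) \<le> w \<theta>" for m
  proof (intro AE_I2)
    fix \<theta>
    have "norm (G (of_real (r m) * cis \<theta>)) \<le> C" by (rule C[OF inD])
    then have "(norm (G (of_real (r m) * cis \<theta>)))^2 \<le> C^2" by (simp add: power_mono)
    then show "norm (s m \<theta>) \<le> w \<theta>" unfolding s_def w_def by (simp add: indicator_def)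
  qed
  have "(\<lambda>m. integral\<^sup>L lborel (s m)) \<longlonglongrightarrow> integral\<^sup>L lborel f"
    by (rule integral_dominated_convergence[OF mf ms iw L bound])
  then show ?thesis unfolding s_def f_def set_lebesgue_integral_def by simp
qed


lemma iso_from_radial:
  fixes G H :: "complex \<Rightarrow> complex" and h :: "real \<Rightarrow> real"
  assumes G: "G holomorphic_on D" and CG: "\<And>z. z \<in> D \<Longrightarrow> norm (G z) \<le> C"
    and h: "continuous_on UNIV h"
    and lim: "AE \<theta> in lborel. \<theta> \<in> {0..2*pi} \<longrightarrow> ((\<lambda>r. (norm (G (of_real r * cis \<theta>)))^2) \<longlongrightarrow> h \<theta>) (at_left 1)"
  shows "(\<lambda>k. (norm (taylor_coeff G k))^2) sums ((LINT \<theta>:{0..2*pi}|lborel. h \<theta>) / (2*pi))"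
proof -
  define r where "r m = 1 - inverse (real (Suc m))" for m
  have r0: "0 \<le> r m" for m unfolding r_def by (simp add: inverse_le_1_iff)
  have r1: "r m < 1" for m unfolding r_def by simp
  have rl: "r \<longlonglongrightarrow> 1"
    unfolding r_def using tendsto_diff[OF tendsto_const LIMSEQ_inverse_real_of_nat, of 1] by simp
  show ?thesis
  proof (rule abel_nonneg[OF _ r0 r1 rl])
    show "(\<lambda>k. (norm (taylor_coeff G k))^2 * r m ^ (2*k)) sums
       ((LINT \<theta>:{0..2*pi}|lborel. (norm (G (of_real (r m) * cis \<theta>)))^2) / (2*pi))" for m
      by (rule parseval_r[OF G r0 r1])
    show "(\<lambda>m. (LINT \<theta>:{0..2*pi}|lborel. (norm (G (of_real (r m) * cis \<theta>)))^2) / (2*pi)) \<longlonglongrightarrow>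
        (LINT \<theta>:{0..2*pi}|lborel. h \<theta>) / (2*pi)"
      by (intro tendsto_divide tendsto_const radial_integral_limit[OF G CG h lim r0 r1 rl]) (use pi_gt_zero in auto)
  qed simp
qed

lemma inner_poly_iso:
  assumes g: "inner_function g"
  shows "(\<lambda>k. (norm (taylor_coeff (\<lambda>z. g z * poly p z) k))^2) sums nn (coeff p)"
    and "l2 (coeff p)"
proof -
  have gh: "g holomorphic_on D" and gb: "bounded (g ` D)"
    and gae: "AE \<theta> in lborel. \<theta> \<in> {0..2*pi} \<longrightarrow>
        (\<exists>L. ((\<lambda>r. g (complex_of_real r * cis \<theta>)) \<longlongrightarrow> L) (at_left 1) \<and> norm L = 1)"
    using g unfolding inner_function_def by auto
  obtain M where M: "\<forall>z\<in>D. norm (g z) \<le> M" using gb unfolding bounded_iff by auto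
  have cp: "continuous_on (cball 0 1) (poly p)" by (intro continuous_intros)
  obtain P where P: "\<And>z. z \<in> cball 0 1 \<Longrightarrow> norm (poly p z) \<le> P"
    using continuous_on_compact_bound[OF compact_cball cp] by blast
  define G where "G = (\<lambda>z. g z * poly p z)"
  have Gh: "G holomorphic_on D" unfolding G_def by (intro holomorphic_intros gh)
  have GC: "norm (G z) \<le> M * P" if "z \<in> D" for z
  proof -
    have "norm (poly p z) \<le> P" using P that by auto
    moreover have "norm (g z) \<le> M" using M that by blast
    moreover have "0 \<le> M" using M norm_ge_zero[of "g 0"] by (meson centre_in_ball order_trans zero_less_one)
    ultimately show ?thesis unfolding G_def norm_mult
      by (intro mult_mono) auto
  qed
  have ph: "poly p holomorphic_on D" by (intro holomorphic_intros)
  have pC: "norm (poly p z) \<le> P" if "z \<in> D" for z using P that by auto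
  define h where "h \<theta> = (norm (poly p (cis \<theta>)))^2" for \<theta>
  have hc: "continuous_on UNIV h" unfolding h_def by (intro continuous_intros)
  have plim: "((\<lambda>r. poly p (complex_of_real r * cis \<theta>)) \<longlongrightarrow> poly p (cis \<theta>)) (at_left 1)" for \<theta>
  proof -
    have "((\<lambda>r. complex_of_real r * cis \<theta>) \<longlongrightarrow> complex_of_real 1 * cis \<theta>) (at_left 1)"
      by (intro tendsto_intros)
    then show ?thesis by (intro tendsto_poly) simp
  qed
  have limG: "AE \<theta> in lborel. \<theta> \<in> {0..2*pi} \<longrightarrow>
      ((\<lambda>r. (norm (G (of_real r * cis \<theta>)))^2) \<longlongrightarrow> h \<theta>) (at_left 1)"
    using gae
  proof eventually_elim
    case (elim \<theta>)
    show ?case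
    proof
      assume "\<theta> \<in> {0..2*pi}"
      then obtain L where L: "((\<lambda>r. g (complex_of_real r * cis \<theta>)) \<longlongrightarrow> L) (at_left 1)" "norm L = 1"
        using elim by blast
      have "((\<lambda>r. (norm (G (of_real r * cis \<theta>)))^2) \<longlongrightarrow> (norm (L * poly p (cis \<theta>)))^2) (at_left 1)"
        unfolding G_def by (intro tendsto_intros L plim)
      then show "((\<lambda>r. (norm (G (of_real r * cis \<theta>)))^2) \<longlongrightarrow> h \<theta>) (at_left 1)"
        using L(2) by (simp add: h_def norm_mult)
    qed
  qed
  have limp: "AE \<theta> in lborel. \<theta> \<in> {0..2*pi} \<longrightarrow>
      ((\<lambda>r. (norm (poly p (of_real r * cis \<theta>)))^2) \<longlongrightarrow> h \<theta>) (at_left 1)"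
    unfolding h_def by (intro AE_I2 impI tendsto_intros plim)
  have s1: "(\<lambda>k. (norm (taylor_coeff G k))^2) sums ((LINT \<theta>:{0..2*pi}|lborel. h \<theta>) / (2*pi))"
    by (rule iso_from_radial[OF Gh GC hc limG])
  have s2: "(\<lambda>k. (norm (coeff p k))^2) sums ((LINT \<theta>:{0..2*pi}|lborel. h \<theta>) / (2*pi))"
    using iso_from_radial[OF ph pC hc limp] by (simp add: tc_poly)
  show l: "l2 (coeff p)" unfolding l2_def using s2 sums_summable by blast
  have "nn (coeff p) = (LINT \<theta>:{0..2*pi}|lborel. h \<theta>) / (2*pi)"
    unfolding nn_def using s2 sums_unique by metis
  then show "(\<lambda>k. (norm (taylor_coeff (\<lambda>z. g z * poly p z) k))^2) sums nn (coeff p)"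
    using s1 unfolding G_def by simp
qed


definition conv :: "(nat \<Rightarrow> complex) \<Rightarrow> (nat \<Rightarrow> complex) \<Rightarrow> nat \<Rightarrow> complex" where
  "conv \<gamma> c k = (\<Sum>i\<le>k. \<gamma> i * c (k - i))"

definition trunc :: "nat \<Rightarrow> (nat \<Rightarrow> complex) \<Rightarrow> nat \<Rightarrow> complex" where
  "trunc N c k = (if k < N then c k else 0)"

lemma trunc_poly: "\<exists>p. coeff p = trunc N c"
proof
  show "coeff (\<Sum>k<N. monom (c k) k) = trunc N c"
  proof
    fix j
    have "coeff (\<Sum>k<N. monom (c k) k) j = (\<Sum>k<N. if k = j then c k else 0)"
      by (simp add: coeff_sum coeff_monom)
    also have "\<dots> = trunc N c j" by (simp add: trunc_def)
    finally show "coeff (\<Sum>k<N. monom (c k) k) j = trunc N c j" .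
  qed
qed

lemma conv_diff: "conv \<gamma> (\<lambda>k. a k - b k) = (\<lambda>k. conv \<gamma> a k - conv \<gamma> b k)"
  unfolding conv_def by (simp add: fun_eq_iff right_diff_distrib sum_subtractf)

lemma conv_add: "conv \<gamma> (\<lambda>k. a k + b k) = (\<lambda>k. conv \<gamma> a k + conv \<gamma> b k)"
  unfolding conv_def by (simp add: fun_eq_iff distrib_left sum.distrib)

lemma conv_scale: "conv \<gamma> (\<lambda>k. x * a k) = (\<lambda>k. x * conv \<gamma> a k)"
  unfolding conv_def by (simp add: fun_eq_iff sum_distrib_left mult_ac)

lemma conv_trunc: "k < N \<Longrightarrow> conv \<gamma> (trunc N c) k = conv \<gamma> c k"
  unfolding conv_def trunc_def by (intro sum.cong) auto

lemma nn_trunc: "l2 c \<Longrightarrow> nn (trunc N c) = (\<Sum>k<N. (norm (c k))^2)"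
proof -
  have "nn (trunc N c) = (\<Sum>k<N. (norm (trunc N c k))^2)"
    unfolding nn_def by (rule suminf_finite) (auto simp: trunc_def)
  then show ?thesis by (simp add: trunc_def)
qed

lemma l2_trunc: "l2 (trunc N c)"
  by (rule l2_finite[of N]) (simp add: trunc_def)

lemma nn_tail:
  assumes "l2 c"
  shows "(\<lambda>N. nn (\<lambda>k. c k - trunc N c k)) \<longlonglongrightarrow> 0"
proof -
  have eq: "nn (\<lambda>k. c k - trunc N c k) = nn c - (\<Sum>k<N. (norm (c k))^2)" for N
  proof -
    have "(\<lambda>k. (norm (c k - trunc N c k))^2) = (\<lambda>k. (norm (c k))^2 - (norm (trunc N c k))^2)"
      by (auto simp: fun_eq_iff trunc_def)
    moreover have "(\<lambda>k. (norm (c k))^2 - (norm (trunc N c k))^2) sums (nn c - nn (trunc N c))"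
      using nn_sums[OF assms] nn_sums[OF l2_trunc] by (rule sums_diff)
    ultimately have "(\<lambda>k. (norm (c k - trunc N c k))^2) sums (nn c - nn (trunc N c))" by simp
    then have "nn (\<lambda>k. c k - trunc N c k) = nn c - nn (trunc N c)"
      unfolding nn_def[of "\<lambda>k. c k - trunc N c k"] by (rule sums_unique[symmetric])
    then show ?thesis using nn_trunc[OF assms] by simp
  qed
  have "(\<lambda>N. \<Sum>k<N. (norm (c k))^2) \<longlonglongrightarrow> nn c"
    using nn_sums[OF assms] unfolding sums_def .
  then have "(\<lambda>N. nn c - (\<Sum>k<N. (norm (c k))^2)) \<longlonglongrightarrow> nn c - nn c"
    by (intro tendsto_intros)
  then show ?thesis unfolding eq by simp
qed

lemma conv_le:
  assumes H: "\<And>p. (\<lambda>k. (norm (conv \<gamma> (coeff p) k))^2) sums nn (coeff p)" and c: "l2 c"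
  shows "l2 (conv \<gamma> c)" "nn (conv \<gamma> c) \<le> nn c"
proof -
  have part: "(\<Sum>k<K. (norm (conv \<gamma> c k))^2) \<le> nn c" for K
  proof -
    obtain p where p: "coeff p = trunc K c" using trunc_poly by blast
    have "(\<Sum>k<K. (norm (conv \<gamma> c k))^2) = (\<Sum>k<K. (norm (conv \<gamma> (trunc K c) k))^2)"
      by (intro sum.cong) (auto simp: conv_trunc)
    also have "\<dots> \<le> nn (trunc K c)"
      using sum_le_suminf[OF sums_summable[OF H[of p]], of "{..<K}"] sums_unique[OF H[of p]]
      unfolding p by auto
    also have "\<dots> = (\<Sum>k<K. (norm (c k))^2)" by (rule nn_trunc[OF c])
    also have "\<dots> \<le> nn c" unfolding nn_def using c unfolding l2_def
      by (intro sum_le_suminf) auto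
    finally show ?thesis .
  qed
  have s: "summable (\<lambda>k. (norm (conv \<gamma> c k))^2)"
    by (rule summableI_nonneg_bounded[OF _ part]) simp
  then show "l2 (conv \<gamma> c)" unfolding l2_def .
  show "nn (conv \<gamma> c) \<le> nn c" using suminf_le_const[OF s part] by (simp only: nn_def[of "conv \<gamma> c"])
qed

lemma conv_iso:
  assumes H: "\<And>p. (\<lambda>k. (norm (conv \<gamma> (coeff p) k))^2) sums nn (coeff p)" and c: "l2 c"
  shows "l2 (conv \<gamma> c)" "nn (conv \<gamma> c) = nn c"
proof -
  show lc: "l2 (conv \<gamma> c)" by (rule conv_le[OF H c])
  have le: "nn (conv \<gamma> c) \<le> nn c" by (rule conv_le[OF H c])
  have ineq: "sqrt (\<Sum>k<N. (norm (c k))^2) \<le> sqrt (nn (conv \<gamma> c)) + sqrt (nn (\<lambda>k. c k - trunc N c k))" for N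
  proof -
    obtain p where p: "coeff p = trunc N c" using trunc_poly by blast
    have ltr: "l2 (conv \<gamma> (trunc N c))" by (rule conv_le[OF H l2_trunc])
    have ld: "l2 (\<lambda>k. c k - trunc N c k)" by (rule l2_diff[OF c l2_trunc])
    have e1: "nn (conv \<gamma> (trunc N c)) = (\<Sum>k<N. (norm (c k))^2)"
      using sums_unique[OF H[of p]] nn_trunc[OF c, of N] unfolding p nn_def by simp
    have e2: "conv \<gamma> (trunc N c) = (\<lambda>k. conv \<gamma> c k + (- 1) * conv \<gamma> (\<lambda>k. c k - trunc N c k) k)"
      by (simp add: conv_diff)
    have "sqrt (\<Sum>k<N. (norm (c k))^2) = sqrt (nn (\<lambda>k. conv \<gamma> c k + (- 1) * conv \<gamma> (\<lambda>k. c k - trunc N c k) k))"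
      using e1 e2 by simp
    also have "\<dots> \<le> sqrt (nn (conv \<gamma> c)) + sqrt (nn (\<lambda>k. (- 1) * conv \<gamma> (\<lambda>k. c k - trunc N c k) k))"
      by (rule nn_triangle[OF lc l2_scale[OF conv_le(1)[OF H ld]]])
    also have "nn (\<lambda>k. (- 1) * conv \<gamma> (\<lambda>k. c k - trunc N c k) k) = nn (conv \<gamma> (\<lambda>k. c k - trunc N c k))"
      using nn_scale[OF conv_le(1)[OF H ld], of "-1"] by simp
    also have "\<dots> \<le> nn (\<lambda>k. c k - trunc N c k)" by (rule conv_le(2)[OF H ld])
    finally show ?thesis by simp
  qed
  have l1: "(\<lambda>N. sqrt (\<Sum>k<N. (norm (c k))^2)) \<longlonglongrightarrow> sqrt (nn c)"
    using nn_sums[OF c] unfolding sums_def by (intro tendsto_intros)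
  have l2': "(\<lambda>N. sqrt (nn (conv \<gamma> c)) + sqrt (nn (\<lambda>k. c k - trunc N c k))) \<longlonglongrightarrow> sqrt (nn (conv \<gamma> c)) + sqrt 0"
    by (intro tendsto_intros nn_tail[OF c])
  have "sqrt (nn c) \<le> sqrt (nn (conv \<gamma> c)) + sqrt 0"
    using l1 l2' ineq by (intro LIMSEQ_le[OF l1 l2']) auto
  then have "nn c \<le> nn (conv \<gamma> c)" by simp
  with le show "nn (conv \<gamma> c) = nn c" by simp
qed

lemma conv_ip:
  assumes H: "\<And>p. (\<lambda>k. (norm (conv \<gamma> (coeff p) k))^2) sums nn (coeff p)" and a: "l2 a" and b: "l2 b"
  shows "ip (conv \<gamma> a) (conv \<gamma> b) = ip a b"
proof -
  have re: "Re (ip (conv \<gamma> x) (conv \<gamma> y)) = Re (ip x y)" if x: "l2 x" and y: "l2 y" for x y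
  proof -
    have "nn (\<lambda>k. x k + y k) = nn (conv \<gamma> (\<lambda>k. x k + y k))"
      using conv_iso(2)[OF H l2_add[OF x y]] by simp
    also have "\<dots> = nn (\<lambda>k. conv \<gamma> x k + conv \<gamma> y k)" by (simp add: conv_add)
    also have "\<dots> = nn (conv \<gamma> x) + nn (conv \<gamma> y) + 2 * Re (ip (conv \<gamma> x) (conv \<gamma> y))"
      by (rule nn_add[OF conv_iso(1)[OF H x] conv_iso(1)[OF H y]])
    also have "\<dots> = nn x + nn y + 2 * Re (ip (conv \<gamma> x) (conv \<gamma> y))"
      using conv_iso(2)[OF H x] conv_iso(2)[OF H y] by simp
    finally show ?thesis using nn_add[OF x y] by simp
  qed
  have ib: "l2 (\<lambda>k. \<i> * b k)" by (rule l2_scale[OF b])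
  have "Re (ip (conv \<gamma> a) (conv \<gamma> (\<lambda>k. \<i> * b k))) = Re (ip a (\<lambda>k. \<i> * b k))"
    by (rule re[OF a ib])
  then have im: "Im (ip (conv \<gamma> a) (conv \<gamma> b)) = Im (ip a b)"
    unfolding conv_scale using ip_scale2[OF conv_iso(1)[OF H b] conv_iso(1)[OF H a], of \<i>]
      ip_scale2[OF b a, of \<i>] by simp
  show ?thesis using re[OF a b] im by (simp add: complex_eq_iff)
qed


lemma inj_mult:
  assumes f: "f holomorphic_on D" and z0: "z0 \<in> D" "f z0 \<noteq> 0"
    and z: "\<And>k. taylor_coeff (\<lambda>z. poly p z * f z) k = 0"
  shows "p = 0"
proof (rule ccontr)
  assume p: "p \<noteq> 0"
  have pf: "(\<lambda>z. poly p z * f z) holomorphic_on D" by (intro holomorphic_intros f)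
  have zero: "poly p w * f w = 0" if "w \<in> D" for w
  proof -
    have "(\<lambda>k. taylor_coeff (\<lambda>z. poly p z * f z) k * w ^ k) sums (poly p w * f w)"
      by (rule tc_sums[OF pf that])
    then have "(\<lambda>k. 0::complex) sums (poly p w * f w)" using z by simp
    from sums_unique2[OF this sums_zero] show ?thesis by simp
  qed
  have "continuous (at z0) f"
    using holomorphic_on_imp_continuous_on[OF f] z0(1)
    by (simp add: continuous_on_eq_continuous_at)
  then obtain \<epsilon> where \<epsilon>: "\<epsilon> > 0" "\<And>y. dist z0 y < \<epsilon> \<Longrightarrow> f y \<noteq> 0"
    using continuous_at_avoid[of z0 f 0] z0(2) by blast
  define W where "W = ball z0 \<epsilon> \<inter> D"
  define Z where "Z = {x. poly p x = 0}"
  have fZ: "finite Z" unfolding Z_def using poly_roots_finite[OF p] .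
  have oW: "open (W - Z)" unfolding W_def using fZ by (intro open_Diff open_Int finite_imp_closed) auto
  have "W - Z \<noteq> {}"
  proof
    assume "W - Z = {}"
    then have "W \<subseteq> Z" by blast
    then have "finite W" using fZ finite_subset by blast
    moreover have "open W" unfolding W_def by auto
    ultimately have "W = {}" using finite_imp_not_open by blast
    moreover have "z0 \<in> W" unfolding W_def using \<epsilon> z0 by auto
    ultimately show False by blast
  qed
  then obtain w where w: "w \<in> W" "w \<notin> Z" by blast
  have "poly p w \<noteq> 0" using w unfolding Z_def by auto
  moreover have "f w \<noteq> 0" using w \<epsilon> unfolding W_def by auto
  moreover have "poly p w * f w = 0" using zero w unfolding W_def by auto
  ultimately show False by simp
qed

definition shiftc :: "nat \<Rightarrow> (nat \<Rightarrow> complex) \<Rightarrow> nat \<Rightarrow> complex" where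
  "shiftc i a k = (if i \<le> k then a (k - i) else 0)"

definition delta0 :: "nat \<Rightarrow> complex" where
  "delta0 k = (if k = 0 then 1 else 0)"

lemma l2_shiftc: "l2 a \<Longrightarrow> l2 (shiftc i a)"
proof -
  assume a: "l2 a"
  have "summable (\<lambda>k. (norm (shiftc i a (k + i)))^2)"
    using a unfolding l2_def shiftc_def by simp
  then show ?thesis unfolding l2_def by (subst (asm) summable_iff_shift)
qed

lemma l2_delta0: "l2 delta0" by (rule l2_finite[of 1]) (simp add: delta0_def)

lemma tc_monom_mult:
  assumes f: "f holomorphic_on D"
  shows "taylor_coeff (\<lambda>z. z ^ i * f z) = shiftc i (taylor_coeff f)"
proof
  fix k
  have h: "poly (monom 1 i) holomorphic_on D" by (intro holomorphic_intros)
  have "taylor_coeff (\<lambda>z. z ^ i * f z) k = taylor_coeff (\<lambda>z. poly (monom 1 i) z * f z) k"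
    by (simp add: poly_monom)
  also have "\<dots> = (\<Sum>j\<le>k. coeff (monom 1 i) j * taylor_coeff f (k - j))"
    using tc_mult[OF h f] by (simp add: tc_poly)
  also have "\<dots> = (\<Sum>j\<le>k. if j = i then taylor_coeff f (k - j) else 0)"
    by (intro sum.cong) (auto simp: coeff_monom)
  also have "\<dots> = shiftc i (taylor_coeff f) k" by (simp add: shiftc_def)
  finally show "taylor_coeff (\<lambda>z. z ^ i * f z) k = shiftc i (taylor_coeff f) k" .
qed

lemma tc_polymult:
  assumes f: "f holomorphic_on D" and q: "degree q \<le> n"
  shows "taylor_coeff (\<lambda>z. poly q z * f z) = (\<lambda>k. \<Sum>i<Suc n. coeff q i * shiftc i (taylor_coeff f) k)"
proof
  fix k
  have pq: "poly q z = (\<Sum>i<Suc n. coeff q i * z ^ i)" for z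
  proof -
    have "poly q z = (\<Sum>i\<le>degree q. coeff q i * z ^ i)" by (rule poly_altdef)
    also have "\<dots> = (\<Sum>i\<le>n. coeff q i * z ^ i)"
      using q by (intro sum.mono_neutral_left) (auto simp: coeff_eq_0)
    finally show ?thesis by (simp add: lessThan_Suc_atMost)
  qed
  have "taylor_coeff (\<lambda>z. poly q z * f z) k = taylor_coeff (\<lambda>z. \<Sum>i<Suc n. coeff q i * (z ^ i * f z)) k"
    unfolding pq sum_distrib_right by (simp only: mult.assoc)
  also have "\<dots> = (\<Sum>i<Suc n. taylor_coeff (\<lambda>z. coeff q i * (z ^ i * f z)) k)"
    by (rule tc_sum) (auto intro!: holomorphic_intros f)
  also have "\<dots> = (\<Sum>i<Suc n. coeff q i * shiftc i (taylor_coeff f) k)"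
    by (intro sum.cong refl) (simp add: tc_cmult holomorphic_intros f tc_monom_mult[OF f])
  finally show "taylor_coeff (\<lambda>z. poly q z * f z) k = (\<Sum>i<Suc n. coeff q i * shiftc i (taylor_coeff f) k)" .
qed

lemma nn_swap: "nn (\<lambda>k. a k - b k) = nn (\<lambda>k. b k - a k)"
  unfolding nn_def by (simp add: norm_minus_commute)

lemma H2_norm_nn: "H2_norm F = sqrt (nn (taylor_coeff F))"
  unfolding H2_norm_def nn_def ..


definition Sq :: "nat \<Rightarrow> (nat \<Rightarrow> complex) \<Rightarrow> complex poly \<Rightarrow> nat \<Rightarrow> complex" where
  "Sq n a q k = (\<Sum>i<Suc n. coeff q i * shiftc i a k)"

lemma l2_Sq: "l2 a \<Longrightarrow> l2 (Sq n a q)"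
  unfolding Sq_def by (intro l2_sum l2_scale l2_shiftc) auto

lemma Sq_smult: "Sq n a (smult x q) k = x * Sq n a q k"
  unfolding Sq_def coeff_smult sum_distrib_left by (simp only: mult.assoc)

lemma Sq_diff: "Sq n a (q1 - q2) k = Sq n a q1 k - Sq n a q2 k"
  unfolding Sq_def by (simp add: left_diff_distrib sum_subtractf)

lemma Sq_add: "Sq n a (q1 + q2) k = Sq n a q1 k + Sq n a q2 k"
  unfolding Sq_def by (simp add: distrib_right sum.distrib)

lemma Sq_0: "Sq n a 0 k = 0"
  unfolding Sq_def by simp

lemma tc_Qf:
  assumes f: "f holomorphic_on D" and q: "degree q \<le> n"
  shows "taylor_coeff (\<lambda>z. poly q z * f z - c) = (\<lambda>k. Sq n (taylor_coeff f) q k - c * delta0 k)"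
proof
  fix k
  have "taylor_coeff (\<lambda>z. poly q z * f z - c) k = taylor_coeff (\<lambda>z. poly q z * f z) k - taylor_coeff (\<lambda>z. c) k"
    by (rule tc_diff) (auto intro!: holomorphic_intros f)
  then show "taylor_coeff (\<lambda>z. poly q z * f z - c) k = Sq n (taylor_coeff f) q k - c * delta0 k"
    using tc_polymult[OF f q] by (simp add: tc_const delta0_def Sq_def)
qed

lemma tc_Qf0:
  assumes f: "f holomorphic_on D" and q: "degree q \<le> n"
  shows "taylor_coeff (\<lambda>z. poly q z * f z) = Sq n (taylor_coeff f) q"
  using tc_polymult[OF f q] unfolding Sq_def by (simp add: fun_eq_iff)

lemma isQn_f_iff:
  assumes f: "f holomorphic_on D"
  shows "is_Qn n f q \<longleftrightarrow> degree q \<le> n \<and> (\<forall>p. degree p \<le> n \<longrightarrow>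
     nn (\<lambda>k. Sq n (taylor_coeff f) q k - delta0 k) \<le> nn (\<lambda>k. Sq n (taylor_coeff f) p k - delta0 k))"
  unfolding is_Qn_def H2_norm_nn
  using tc_Qf[OF f, of _ n 1] by (auto simp: real_sqrt_le_iff)

lemma parallelogram:
  assumes "l2 a" "l2 b"
  shows "nn (\<lambda>k. a k + b k) + nn (\<lambda>k. a k - b k) = 2 * nn a + 2 * nn b"
  using nn_add[OF assms] nn_diff[OF assms] by simp

lemma Qn_f_unique_exists:
  assumes fH: "f \<in> H2_star"
  shows "\<exists>!q. is_Qn n f q"
proof -
  have f: "f holomorphic_on D" and lf: "l2 (taylor_coeff f)"
    and z0: "\<exists>z0\<in>D. f z0 \<noteq> 0"
    using fH unfolding H2_star_def H2_def l2_def by auto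
  define tf where "tf = taylor_coeff f"
  define e where "e i = shiftc i tf" for i
  have le: "l2 (e i)" for i unfolding e_def tf_def by (rule l2_shiftc[OF lf])
  have Se: "Sq n tf q k = (\<Sum>i<Suc n. coeff q i * e i k)" for q k unfolding Sq_def e_def ..
  define \<Phi> where "\<Phi> q = nn (\<lambda>k. Sq n tf q k - delta0 k)" for q
  have iff: "is_Qn n f q \<longleftrightarrow> degree q \<le> n \<and> (\<forall>p. degree p \<le> n \<longrightarrow> \<Phi> q \<le> \<Phi> p)" for q
    unfolding \<Phi>_def tf_def by (rule isQn_f_iff[OF f])
  have lS: "l2 (\<lambda>k. Sq n tf q k - delta0 k)" for q
    unfolding tf_def by (intro l2_diff l2_Sq lf l2_delta0)
  obtain \<beta> where \<beta>: "\<forall>j<Suc n. ip (\<lambda>k. delta0 k - (\<Sum>i<Suc n. \<beta> i * e i k)) (e j) = 0"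
    using proj_exists[where n="Suc n" and e=e, OF le l2_delta0] by blast
  define q0 where "q0 = (\<Sum>i<Suc n. monom (\<beta> i) i)"
  have cq0: "coeff q0 i = (if i < Suc n then \<beta> i else 0)" for i
  proof -
    have "coeff q0 i = (\<Sum>j<Suc n. if j = i then \<beta> j else 0)"
      unfolding q0_def coeff_sum by (intro sum.cong refl) (simp add: coeff_monom)
    also have "\<dots> = (if i < Suc n then \<beta> i else 0)" by (subst sum.delta) auto
    finally show ?thesis .
  qed
  have dq0: "degree q0 \<le> n"
    unfolding q0_def
  proof (rule degree_sum_le)
    fix i assume "i \<in> {..<Suc n}"
    then show "degree (monom (\<beta> i) i) \<le> n" using degree_monom_le[of "\<beta> i" i] by auto
  qed simp
  have Sq0: "Sq n tf q0 k = (\<Sum>i<Suc n. \<beta> i * e i k)" for k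
    unfolding Se by (intro sum.cong) (auto simp: cq0)
  have ex: "is_Qn n f q0"
    unfolding iff
  proof (intro conjI allI impI dq0)
    fix p :: "complex poly" assume "degree p \<le> n"
    have "nn (\<lambda>k. delta0 k - (\<Sum>i<Suc n. \<beta> i * e i k)) \<le> nn (\<lambda>k. delta0 k - (\<Sum>i<Suc n. coeff p i * e i k))"
      by (rule proj_min[where e=e, OF le l2_delta0 \<beta>])
    moreover have "\<Phi> q0 = nn (\<lambda>k. delta0 k - (\<Sum>i<Suc n. \<beta> i * e i k))"
      unfolding \<Phi>_def Sq0 by (rule nn_swap)
    moreover have "\<Phi> p = nn (\<lambda>k. delta0 k - (\<Sum>i<Suc n. coeff p i * e i k))"
      unfolding \<Phi>_def Se by (rule nn_swap)
    ultimately show "\<Phi> q0 \<le> \<Phi> p" by simp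
  qed
  have uniq: "q1 = q2" if q1: "is_Qn n f q1" and q2: "is_Qn n f q2" for q1 q2
  proof -
    have d1: "degree q1 \<le> n" and m1: "\<And>p. degree p \<le> n \<Longrightarrow> \<Phi> q1 \<le> \<Phi> p" using q1 iff by auto
    have d2: "degree q2 \<le> n" and m2: "\<And>p. degree p \<le> n \<Longrightarrow> \<Phi> q2 \<le> \<Phi> p" using q2 iff by auto
    define u1 where "u1 k = Sq n tf q1 k - delta0 k" for k
    define u2 where "u2 k = Sq n tf q2 k - delta0 k" for k
    have l1: "l2 u1" unfolding u1_def by (rule lS)
    have l2': "l2 u2" unfolding u2_def by (rule lS)
    define m where "m = smult (1/2) (q1 + q2)"
    have dm: "degree m \<le> n" unfolding m_def
      using degree_add_le[OF d1 d2] degree_smult_le order_trans by blast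
    have um: "Sq n tf m k - delta0 k = (1/2) * (u1 k + u2 k)" for k
      unfolding m_def u1_def u2_def Sq_smult Sq_add by (simp add: algebra_simps)
    have "\<Phi> m = (norm (1/2 :: complex))^2 * nn (\<lambda>k. u1 k + u2 k)"
      unfolding \<Phi>_def um by (rule nn_scale[OF l2_add[OF l1 l2']])
    also have "\<dots> = nn (\<lambda>k. u1 k + u2 k) / 4" by (simp add: power2_eq_square norm_divide)
    finally have \<Phi>m: "\<Phi> m = nn (\<lambda>k. u1 k + u2 k) / 4" .
    have e1: "\<Phi> q1 = nn u1" and e2: "\<Phi> q2 = nn u2" unfolding \<Phi>_def u1_def u2_def by simp_all
    have "\<Phi> q1 \<le> \<Phi> q2" "\<Phi> q2 \<le> \<Phi> q1" "\<Phi> q1 \<le> \<Phi> m" using m1 m2 d1 d2 dm by auto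
    then have "nn (\<lambda>k. u1 k - u2 k) \<le> 0"
      using parallelogram[OF l1 l2'] \<Phi>m e1 e2 by simp
    then have "nn (\<lambda>k. u1 k - u2 k) = 0" using nn_nonneg[OF l2_diff[OF l1 l2']] by simp
    then have "\<forall>k. u1 k - u2 k = 0" using nn_eq_0[OF l2_diff[OF l1 l2']] by blast
    then have z: "Sq n tf (q1 - q2) k = 0" for k unfolding Sq_diff u1_def u2_def by simp
    have dd: "degree (q1 - q2) \<le> n" using degree_diff_le[OF d1 d2] .
    have "taylor_coeff (\<lambda>z. poly (q1 - q2) z * f z) k = 0" for k
      using tc_Qf0[OF f dd] z unfolding tf_def by simp
    then have "q1 - q2 = 0" using inj_mult[OF f] z0 by blast
    then show ?thesis by simp
  qed
  show ?thesis using ex uniq by blast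
qed


declare degree_smult_eq[simp]

lemma ip_delta0: "l2 x \<Longrightarrow> ip x delta0 = x 0"
proof -
  assume x: "l2 x"
  have "(\<lambda>k. x k * cnj (delta0 k)) = (\<lambda>k. if k = 0 then x k else 0)"
    by (auto simp: fun_eq_iff delta0_def)
  then have "(\<lambda>k. x k * cnj (delta0 k)) sums x 0" using sums_single[of 0 x] by simp
  then show ?thesis using ip_sums[OF x l2_delta0] sums_unique2 by blast
qed

lemma conv_delta0: "conv \<gamma> delta0 = \<gamma>"
proof
  fix k
  have "conv \<gamma> delta0 k = (\<Sum>i\<le>k. if i = k then \<gamma> i else 0)"
    unfolding conv_def by (intro sum.cong) (auto simp: delta0_def)
  then show "conv \<gamma> delta0 k = \<gamma> k" by simp
qed

lemma conv_at0: "conv \<gamma> a 0 = \<gamma> 0 * a 0"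
  unfolding conv_def by simp

lemma tc_at0: "taylor_coeff g 0 = g 0"
  unfolding taylor_coeff_def by simp

theorem proposition2p2:
  fixes f g :: "complex \<Rightarrow> complex" and n :: nat
  assumes "inner_function g" and "f \<in> H2_star"
  shows "Qn n (\<lambda>z. f z * g z) = smult (cnj (g 0)) (Qn n f)"
proof -
  note g = assms(1) and fH = assms(2)
  have f: "f holomorphic_on D" and lf: "l2 (taylor_coeff f)"
    and z0: "\<exists>z0\<in>D. f z0 \<noteq> 0"
    using fH unfolding H2_star_def H2_def l2_def by auto
  have gh: "g holomorphic_on D" using g unfolding inner_function_def by auto
  define \<gamma> where "\<gamma> = taylor_coeff g"
  have tcgp: "taylor_coeff (\<lambda>z. g z * poly p z) = conv \<gamma> (coeff p)" for p
  proof
    fix k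
    have ph: "poly p holomorphic_on D" by (intro holomorphic_intros)
    show "taylor_coeff (\<lambda>z. g z * poly p z) k = conv \<gamma> (coeff p) k"
      unfolding tc_mult[OF gh ph] conv_def \<gamma>_def tc_poly ..
  qed
  have H: "(\<lambda>k. (norm (conv \<gamma> (coeff p) k))^2) sums nn (coeff p)" for p
    using inner_poly_iso(1)[OF g, of p] unfolding tcgp .
  have l\<gamma>: "l2 \<gamma>" using conv_iso(1)[OF H l2_delta0] unfolding conv_delta0 .
  define c where "c = cnj (g 0)"
  define tf where "tf = taylor_coeff f"
  define a where "a q = (\<lambda>k. Sq n tf q k - c * delta0 k)" for q
  define W where "W = (\<lambda>k. c * \<gamma> k - delta0 k)"
  have la: "l2 (a q)" for q unfolding a_def tf_def by (intro l2_diff l2_Sq lf l2_scale l2_delta0)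
  have lW: "l2 W" unfolding W_def by (intro l2_diff l2_scale l\<gamma> l2_delta0)
  have lca: "l2 (conv \<gamma> (a q))" for q by (rule conv_iso(1)[OF H la])
  have tcA: "taylor_coeff (\<lambda>z. poly q z * (f z * g z) - 1) = (\<lambda>k. conv \<gamma> (a q) k + W k)"
    if q: "degree q \<le> n" for q
  proof
    fix k
    have U: "(\<lambda>z. poly q z * f z - c) holomorphic_on D" by (intro holomorphic_intros f)
    have V: "(\<lambda>z. c * g z - 1) holomorphic_on D" by (intro holomorphic_intros gh)
    have eq: "(\<lambda>z. poly q z * (f z * g z) - 1) = (\<lambda>z. g z * (poly q z * f z - c) + (c * g z - 1))"
      by (simp add: fun_eq_iff algebra_simps)
    have "taylor_coeff (\<lambda>z. poly q z * (f z * g z) - 1) k =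
        taylor_coeff (\<lambda>z. g z * (poly q z * f z - c)) k + taylor_coeff (\<lambda>z. c * g z - 1) k"
      unfolding eq by (rule tc_add) (intro holomorphic_intros f gh)+
    also have "taylor_coeff (\<lambda>z. g z * (poly q z * f z - c)) k = conv \<gamma> (a q) k"
      unfolding tc_mult[OF gh U] conv_def \<gamma>_def a_def tf_def tc_Qf[OF f q] ..
    also have "taylor_coeff (\<lambda>z. c * g z - 1) k = W k"
    proof -
      have "taylor_coeff (\<lambda>z. c * g z - 1) k = taylor_coeff (\<lambda>z. c * g z) k - taylor_coeff (\<lambda>z. 1) k"
        by (rule tc_diff) (intro holomorphic_intros gh)+
      then show ?thesis unfolding W_def \<gamma>_def by (simp add: tc_cmult[OF gh] tc_const delta0_def)
    qed
    finally show "taylor_coeff (\<lambda>z. poly q z * (f z * g z) - 1) k = conv \<gamma> (a q) k + W k" .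
  qed
  have orth: "ip (conv \<gamma> (a q)) W = 0" for q
  proof -
    have "ip (conv \<gamma> (a q)) W = ip (conv \<gamma> (a q)) (\<lambda>k. c * \<gamma> k) - ip (conv \<gamma> (a q)) delta0"
      unfolding W_def by (rule ip_diff2[OF l2_scale[OF l\<gamma>] l2_delta0 lca])
    also have "ip (conv \<gamma> (a q)) (\<lambda>k. c * \<gamma> k) = cnj c * ip (conv \<gamma> (a q)) \<gamma>"
      by (rule ip_scale2[OF l\<gamma> lca])
    also have "ip (conv \<gamma> (a q)) \<gamma> = ip (conv \<gamma> (a q)) (conv \<gamma> delta0)" by (simp add: conv_delta0)
    also have "\<dots> = ip (a q) delta0" by (rule conv_ip[OF H la l2_delta0])
    also have "\<dots> = a q 0" by (rule ip_delta0[OF la])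
    also have "ip (conv \<gamma> (a q)) delta0 = \<gamma> 0 * a q 0" by (simp add: ip_delta0[OF lca] conv_at0)
    finally show ?thesis unfolding c_def \<gamma>_def tc_at0 by simp
  qed
  have nnA: "nn (taylor_coeff (\<lambda>z. poly q z * (f z * g z) - 1)) = nn (a q) + nn W"
    if q: "degree q \<le> n" for q
    unfolding tcA[OF q] nn_add[OF lca lW] orth conv_iso(2)[OF H la] by simp
  have iffg: "is_Qn n (\<lambda>z. f z * g z) q \<longleftrightarrow> degree q \<le> n \<and> (\<forall>p. degree p \<le> n \<longrightarrow> nn (a q) \<le> nn (a p))" for q
  proof -
    have "is_Qn n (\<lambda>z. f z * g z) q \<longleftrightarrow> degree q \<le> n \<and> (\<forall>p. degree p \<le> n \<longrightarrow>
       sqrt (nn (taylor_coeff (\<lambda>z. poly q z * (f z * g z) - 1))) \<le> sqrt (nn (taylor_coeff (\<lambda>z. poly p z * (f z * g z) - 1))))"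
      unfolding is_Qn_def H2_norm_nn by (simp add: mult.assoc)
    also have "\<dots> \<longleftrightarrow> degree q \<le> n \<and> (\<forall>p. degree p \<le> n \<longrightarrow> nn (a q) \<le> nn (a p))"
      using nnA by (auto simp: real_sqrt_le_iff)
    finally show ?thesis .
  qed
  define \<Phi> where "\<Phi> q = nn (\<lambda>k. Sq n tf q k - delta0 k)" for q
  have iff: "is_Qn n f q \<longleftrightarrow> degree q \<le> n \<and> (\<forall>p. degree p \<le> n \<longrightarrow> \<Phi> q \<le> \<Phi> p)" for q
    unfolding \<Phi>_def tf_def by (rule isQn_f_iff[OF f])
  have ex1: "\<exists>!q. is_Qn n f q" by (rule Qn_f_unique_exists[OF fH])
  have Qf: "is_Qn n f (Qn n f)" unfolding Qn_def using theI'[OF ex1] .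
  have Qfu: "q = Qn n f" if "is_Qn n f q" for q using ex1 Qf that by blast
  show ?thesis
  proof (cases "c = 0")
    case True
    have a0: "a q = Sq n tf q" for q unfolding a_def True by simp
    have "is_Qn n (\<lambda>z. f z * g z) q \<longleftrightarrow> q = 0" for q
    proof
      assume "q = 0"
      have "nn (a 0) = 0" unfolding a0 nn_def by (simp add: Sq_0)
      then show "is_Qn n (\<lambda>z. f z * g z) q" unfolding iffg \<open>q = 0\<close>
        using nn_nonneg[OF la] by auto
    next
      assume "is_Qn n (\<lambda>z. f z * g z) q"
      then have dq: "degree q \<le> n" and "nn (a q) \<le> nn (a 0)" unfolding iffg by auto
      moreover have "nn (a 0) = 0" unfolding a0 nn_def by (simp add: Sq_0)
      ultimately have "nn (a q) \<le> 0" by simp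
      then have "nn (a q) = 0" using nn_nonneg[OF la[of q]] by linarith
      then have "\<forall>k. Sq n tf q k = 0" using nn_eq_0[OF la] unfolding a0 by simp
      then have "\<And>k. taylor_coeff (\<lambda>z. poly q z * f z) k = 0"
        using tc_Qf0[OF f dq] unfolding tf_def by simp
      then show "q = 0" using inj_mult[OF f] z0 by blast
    qed
    then have "Qn n (\<lambda>z. f z * g z) = 0" unfolding Qn_def by blast
    then show ?thesis using True unfolding c_def by simp
  next
    case False
    have aS: "a q = (\<lambda>k. c * (Sq n tf (smult (1/c) q) k - delta0 k))" for q
      unfolding a_def Sq_smult using False by (simp add: fun_eq_iff algebra_simps)
    have naq: "nn (a q) = (norm c)^2 * \<Phi> (smult (1/c) q)" for q
      unfolding aS \<Phi>_def by (rule nn_scale) (unfold tf_def, intro l2_diff l2_Sq lf l2_delta0)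
    have cpos: "(norm c)^2 > 0" using False by simp
    have eqv: "is_Qn n (\<lambda>z. f z * g z) q \<longleftrightarrow> is_Qn n f (smult (1/c) q)" for q
    proof
      assume A: "is_Qn n (\<lambda>z. f z * g z) q"
      then have dq: "degree q \<le> n" and m: "\<And>p. degree p \<le> n \<Longrightarrow> nn (a q) \<le> nn (a p)" unfolding iffg by auto
      show "is_Qn n f (smult (1/c) q)" unfolding iff
      proof (intro conjI allI impI)
        show "degree (smult (1/c) q) \<le> n" using dq False by simp
        fix p :: "complex poly" assume dp: "degree p \<le> n"
        have "nn (a q) \<le> nn (a (smult c p))" by (rule m) (use dp False in simp)
        then have "(norm c)^2 * \<Phi> (smult (1/c) q) \<le> (norm c)^2 * \<Phi> p"
          unfolding naq using False by simp
        then show "\<Phi> (smult (1/c) q) \<le> \<Phi> p" using cpos by simp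
      qed
    next
      assume B: "is_Qn n f (smult (1/c) q)"
      then have dq: "degree q \<le> n" and m: "\<And>p. degree p \<le> n \<Longrightarrow> \<Phi> (smult (1/c) q) \<le> \<Phi> p"
        unfolding iff using False by auto
      show "is_Qn n (\<lambda>z. f z * g z) q" unfolding iffg
      proof (intro conjI allI impI dq)
        fix p :: "complex poly" assume dp: "degree p \<le> n"
        have "\<Phi> (smult (1/c) q) \<le> \<Phi> (smult (1/c) p)" by (rule m) (use dp False in simp)
        then show "nn (a q) \<le> nn (a p)" unfolding naq using cpos by simp
      qed
    qed
    have "is_Qn n (\<lambda>z. f z * g z) q \<longleftrightarrow> q = smult c (Qn n f)" for q
    proof
      assume "is_Qn n (\<lambda>z. f z * g z) q"
      then have "smult (1/c) q = Qn n f" using eqv Qfu by blast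
      then have "smult c (smult (1/c) q) = smult c (Qn n f)" by simp
      then show "q = smult c (Qn n f)" using False by (simp add: smult_smult)
    next
      assume "q = smult c (Qn n f)"
      then have "smult (1/c) q = Qn n f" using False by simp
      then show "is_Qn n (\<lambda>z. f z * g z) q" using eqv Qf by simp
    qed
    then have "Qn n (\<lambda>z. f z * g z) = smult c (Qn n f)" unfolding Qn_def by blast
    then show ?thesis unfolding c_def .
  qed
qed


end
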